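(* Let $\mathcal{G}_{\curlywedge}=(G,o,\curlywedge,R_1,\ldots,R_n)$ be a functional Menger $\curlywedge$-algebra of rank $n$ and let $H$ be a nonempty subset of $G$. Then $H$ is a stabilizer of $\mathcal{G}_{\curlywedge}$ if and only if: (1) $H$ is quasi-stable, $\curlywedge$-stable and $v$-unitary; (2) there exists a subset $U\subseteq G$ with $H\subseteq U$, $R_iU\subseteq H$ and $R_i(G\setminus U)\subseteq G\setminus U$ for every $i\in\{1,\ldots,n\}$, such that (3) for all $x,y\in G$: if $x\in U$ and $y\in H$ then $y[R_1x\ldots R_nx]\in H$; and if $x\in U$ and $y\in U$ then $y[R_1x\ldots R_nx]\in U$.
   Context: A functional Menger system of rank $n$ is a nonempty set $G$ with an $(n+1)$-ary operation $o\colon(x_0,x_1,\ldots,x_n)\mapsto x_0[x_1\ldots x_n]$ and unary operations $R_1,\ldots,R_n$ satisfying, for all $i,k\in\{1,\ldots,n\}$ and all elements: (A1) $x[y_1\ldots y_n][z_1\ldots z_n]=x[y_1[z_1\ldots z_n]\ldots y_n[z_1\ldots z_n]]$; (A2) $x[R_1x\ldots R_nx]=x$; (A3) $x[\bar u\,|_iz][R_1y\ldots R_ny]=x[\bar u\,|_iz[R_1y\ldots R_ny]]$; (A4) $R_ix[R_1y\ldots R_ny]=(R_ix)[R_1y\ldots R_ny]$; (A5) $x[R_1y\ldots R_ny][R_1z\ldots R_nz]=x[R_1z\ldots R_nz][R_1y\ldots R_ny]$; (A6) $R_ix[y_1\ldots y_n]=R_i(R_kx)[y_1\ldots y_n]$;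 (A7) $(R_ix)[y_1\ldots y_n]=y_i[R_1(x[y_1\ldots y_n])\ldots R_n(x[y_1\ldots y_n])]$. Here $x[\bar u\,|_iz]$ denotes $x[u_1\ldots u_{i-1}\,z\,u_{i+1}\ldots u_n]$, and $R_ix[\ldots]$ means $R_i(x[\ldots])$. A functional Menger $\curlywedge$-algebra of rank $n$ is an algebra $(G,o,\curlywedge,R_1,\ldots,R_n)$ such that $(G,o,R_1,\ldots,R_n)$ is a functional Menger system of rank $n$, $(G,\curlywedge)$ is a semilattice, and (A8) $x\curlywedge y[R_1z\ldots R_nz]=(x\curlywedge y)[R_1z\ldots R_nz]$; (A9) $x\curlywedge y=x[R_1(x\curlywedge y)\ldots R_n(x\curlywedge y)]$; (A10) $(x\curlywedge y)[z_1\ldots z_n]=x[z_1\ldots z_n]\curlywedge y[z_1\ldots z_n]$. For a set $A$, $\mathcal F(A^n,A)$ is the set of partial maps $A^n\to A$ (viewed as subsets of $A^n\times A$). The Menger composition $f[g_1\ldots g_n]$ is the partial function $\bar a\mapsto f(g_1(\bar a),\ldots,g_n(\bar a))$ (defined exactly when the right side is defined), and $\mathcal R_if$ is the partial function with the same domain as $f$ given by $(a_1,\ldots,a_n)\mapsto a_i$. A representation of $\mathcal G_\curlywedge$ by $n$-place functions on a set $A$ is a map $P\colon G\to\mathcal F(A^n,A)$ with $P(x[y_1\ldots y_n])=P(x)[P(y_1)\ldots P(y_n)]$, $P(R_ix)=\mathcal R_iP(x)$ and $P(x\curlywedge y)=P(x)\cap P(y)$ (set-theoretic intersection). A nonempty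 $H\subseteq G$ is a stabilizer of $\mathcal G_\curlywedge$ if there exist such a representation $P$ on some set $A$ and a point $a\in A$ with $H=\{g\in G: P(g)(a,\ldots,a)=a\}$. A nonempty $H\subseteq G$ is quasi-stable if $x\in H\Rightarrow x[x\ldots x]\in H$; $\curlywedge$-stable if $x,y\in H\Rightarrow x\curlywedge y\in H$; $v$-unitary if $x[y_1\ldots y_n]\in H$ and $y_1,\ldots,y_n\in H$ imply $x\in H$. *)

theory Defs
  imports Main
begin

text \<open>The carrier G of the algebra is the whole type 'a.
 The (n+1)-ary operation o is  mop :: 'a => 'a list => 'a, applied to lists of
 length n:  x[y_1 ... y_n] = mop x [y_1,...,y_n]  (values on lists of other lengths
 are irrelevant). The unary operations R_1..R_n are  R i  for  i in {1..n}.\<close>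

definition Rs :: "nat \<Rightarrow> (nat \<Rightarrow> 'a \<Rightarrow> 'a) \<Rightarrow> 'a \<Rightarrow> 'a list" where
  "Rs n R x = map (\<lambda>i. R i x) [1..<Suc n]"

definition functional_menger_system ::
  "nat \<Rightarrow> ('a \<Rightarrow> 'a list \<Rightarrow> 'a) \<Rightarrow> (nat \<Rightarrow> 'a \<Rightarrow> 'a) \<Rightarrow> bool" where
  "functional_menger_system n mop R \<longleftrightarrow>
     \<comment> \<open>(A1)\<close>
     (\<forall>x ys zs. length ys = n \<longrightarrow> length zs = n \<longrightarrow>
        mop (mop x ys) zs = mop x (map (\<lambda>y. mop y zs) ys)) \<and>
     \<comment> \<open>(A2)\<close>
     (\<forall>x. mop x (Rs n R x) = x) \<and>
     \<comment> \<open>(A3)\<close>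
     (\<forall>x us z y i. length us = n \<longrightarrow> 1 \<le> i \<longrightarrow> i \<le> n \<longrightarrow>
        mop (mop x (us[i - 1 := z])) (Rs n R y) = mop x (us[i - 1 := mop z (Rs n R y)])) \<and>
     \<comment> \<open>(A4)\<close>
     (\<forall>x y i. 1 \<le> i \<longrightarrow> i \<le> n \<longrightarrow>
        R i (mop x (Rs n R y)) = mop (R i x) (Rs n R y)) \<and>
     \<comment> \<open>(A5)\<close>
     (\<forall>x y z. mop (mop x (Rs n R y)) (Rs n R z) = mop (mop x (Rs n R z)) (Rs n R y)) \<and>
     \<comment> \<open>(A6)\<close>
     (\<forall>x ys i k. length ys = n \<longrightarrow> 1 \<le> i \<longrightarrow> i \<le> n \<longrightarrow> 1 \<le> k \<longrightarrow> k \<le> n \<longrightarrow>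
        R i (mop x ys) = R i (mop (R k x) ys)) \<and>
     \<comment> \<open>(A7)\<close>
     (\<forall>x ys i. length ys = n \<longrightarrow> 1 \<le> i \<longrightarrow> i \<le> n \<longrightarrow>
        mop (R i x) ys = mop (ys ! (i - 1)) (Rs n R (mop x ys)))"

definition functional_menger_wedge_algebra ::
  "nat \<Rightarrow> ('a \<Rightarrow> 'a list \<Rightarrow> 'a) \<Rightarrow> ('a \<Rightarrow> 'a \<Rightarrow> 'a) \<Rightarrow> (nat \<Rightarrow> 'a \<Rightarrow> 'a) \<Rightarrow> bool" where
  "functional_menger_wedge_algebra n mop mw R \<longleftrightarrow>
     functional_menger_system n mop R \<and>
     \<comment> \<open>(G, mw) is a semilattice\<close>
     (\<forall>x y z. mw (mw x y) z = mw x (mw y z)) \<and>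
     (\<forall>x y. mw x y = mw y x) \<and>
     (\<forall>x. mw x x = x) \<and>
     \<comment> \<open>(A8)\<close>
     (\<forall>x y z. mw x (mop y (Rs n R z)) = mop (mw x y) (Rs n R z)) \<and>
     \<comment> \<open>(A9)\<close>
     (\<forall>x y. mw x y = mop x (Rs n R (mw x y))) \<and>
     \<comment> \<open>(A10)\<close>
     (\<forall>x y zs. length zs = n \<longrightarrow> mop (mw x y) zs = mw (mop x zs) (mop y zs))"

text \<open>Partial n-place functions on a set A: partial maps from lists of length n
 over A to A (the graph of f is {(xs, v). f xs = Some v}).\<close>

definition is_nfun :: "nat \<Rightarrow> 'b set \<Rightarrow> ('b list \<Rightarrow> 'b option) \<Rightarrow> bool" where
  "is_nfun n A f \<longleftrightarrow> dom f \<subseteq> {xs. length xs = n \<and> set xs \<subseteq> A} \<and> ran f \<subseteq> A"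

definition fcomp :: "('b list \<Rightarrow> 'b option) \<Rightarrow> ('b list \<Rightarrow> 'b option) list \<Rightarrow> ('b list \<Rightarrow> 'b option)" where
  "fcomp f gs = (\<lambda>xs. if (\<forall>g\<in>set gs. g xs \<noteq> None)
                      then f (map (\<lambda>g. the (g xs)) gs) else None)"

definition fR :: "nat \<Rightarrow> ('b list \<Rightarrow> 'b option) \<Rightarrow> ('b list \<Rightarrow> 'b option)" where
  "fR i f = (\<lambda>xs. if f xs = None then None else Some (xs ! (i - 1)))"

definition finter :: "('b list \<Rightarrow> 'b option) \<Rightarrow> ('b list \<Rightarrow> 'b option) \<Rightarrow> ('b list \<Rightarrow> 'b option)" where
  "finter f g = (\<lambda>xs. if f xs = g xs then f xs else None)"

definition is_representation ::
  "nat \<Rightarrow> ('a \<Rightarrow> 'a list \<Rightarrow> 'a) \<Rightarrow> ('a \<Rightarrow> 'a \<Rightarrow> 'a) \<Rightarrow> (nat \<Rightarrow> 'a \<Rightarrow> 'a)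
    \<Rightarrow> 'b set \<Rightarrow> ('a \<Rightarrow> ('b list \<Rightarrow> 'b option)) \<Rightarrow> bool" where
  "is_representation n mop mw R A P \<longleftrightarrow>
     (\<forall>g. is_nfun n A (P g)) \<and>
     (\<forall>x ys. length ys = n \<longrightarrow> P (mop x ys) = fcomp (P x) (map P ys)) \<and>
     (\<forall>i x. 1 \<le> i \<longrightarrow> i \<le> n \<longrightarrow> P (R i x) = fR i (P x)) \<and>
     (\<forall>x y. P (mw x y) = finter (P x) (P y))"

text \<open>Stabilizer, relative to the type 'b from which the representing set A is drawn.\<close>
definition is_stabilizer ::
  "'b itself \<Rightarrow> nat \<Rightarrow> ('a \<Rightarrow> 'a list \<Rightarrow> 'a) \<Rightarrow> ('a \<Rightarrow> 'a \<Rightarrow> 'a) \<Rightarrow> (nat \<Rightarrow> 'a \<Rightarrow> 'a)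
    \<Rightarrow> 'a set \<Rightarrow> bool" where
  "is_stabilizer _ n mop mw R H \<longleftrightarrow> H \<noteq> {} \<and>
     (\<exists>(A :: 'b set) P a. a \<in> A \<and> is_representation n mop mw R A P \<and>
        H = {g. P g (replicate n a) = Some a})"

definition quasi_stable :: "nat \<Rightarrow> ('a \<Rightarrow> 'a list \<Rightarrow> 'a) \<Rightarrow> 'a set \<Rightarrow> bool" where
  "quasi_stable n mop H \<longleftrightarrow> H \<noteq> {} \<and> (\<forall>x\<in>H. mop x (replicate n x) \<in> H)"

definition wedge_stable :: "('a \<Rightarrow> 'a \<Rightarrow> 'a) \<Rightarrow> 'a set \<Rightarrow> bool" where
  "wedge_stable mw H \<longleftrightarrow> H \<noteq> {} \<and> (\<forall>x\<in>H. \<forall>y\<in>H. mw x y \<in> H)"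

definition v_unitary :: "nat \<Rightarrow> ('a \<Rightarrow> 'a list \<Rightarrow> 'a) \<Rightarrow> 'a set \<Rightarrow> bool" where
  "v_unitary n mop H \<longleftrightarrow> H \<noteq> {} \<and>
     (\<forall>x ys. length ys = n \<longrightarrow> set ys \<subseteq> H \<longrightarrow> mop x ys \<in> H \<longrightarrow> x \<in> H)"

end

theory Submission
  imports Defs
begin

lemma Rs_len[simp]: "length (Rs n R x) = n" by (simp add: Rs_def)
lemma Rs_nth: "i < n \<Longrightarrow> Rs n R x ! i = R (Suc i) x" by (simp add: Rs_def del: upt_Suc)
lemma Rs_set: "set (Rs n R x) = (\<lambda>i. R i x) ` {1..n}"
  by (auto simp: Rs_def image_iff) 

locale ctx =
  fixes n :: nat and mop :: "'a \<Rightarrow> 'a list \<Rightarrow> 'a" and mw :: "'a \<Rightarrow> 'a \<Rightarrow> 'a"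
    and R :: "nat \<Rightarrow> 'a \<Rightarrow> 'a" and H U :: "'a set"
  assumes n1: "1 \<le> n"
  and A1: "\<And>x ys zs. length ys = n \<Longrightarrow> length zs = n \<Longrightarrow>
        mop (mop x ys) zs = mop x (map (\<lambda>y. mop y zs) ys)"
  and A3: "\<And>x us z y i. length us = n \<Longrightarrow> 1 \<le> i \<Longrightarrow> i \<le> n \<Longrightarrow>
        mop (mop x (us[i - 1 := z])) (Rs n R y) = mop x (us[i - 1 := mop z (Rs n R y)])"
  and A4: "\<And>x y i. 1 \<le> i \<Longrightarrow> i \<le> n \<Longrightarrow>
        R i (mop x (Rs n R y)) = mop (R i x) (Rs n R y)"
  and A6: "\<And>x ys i k. length ys = n \<Longrightarrow> 1 \<le> i \<Longrightarrow> i \<le> n \<Longrightarrow> 1 \<le> k \<Longrightarrow> k \<le> n \<Longrightarrow>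
        R i (mop x ys) = R i (mop (R k x) ys)"
  and A7: "\<And>x ys i. length ys = n \<Longrightarrow> 1 \<le> i \<Longrightarrow> i \<le> n \<Longrightarrow>
        mop (R i x) ys = mop (ys ! (i - 1)) (Rs n R (mop x ys))"
  and assoc: "\<And>x y z. mw (mw x y) z = mw x (mw y z)"
  and comm: "\<And>x y. mw x y = mw y x"
  and idem: "\<And>x. mw x x = x"
  and A8: "\<And>x y z. mw x (mop y (Rs n R z)) = mop (mw x y) (Rs n R z)"
  and A9: "\<And>x y. mw x y = mop x (Rs n R (mw x y))"
  and A10: "\<And>x y zs. length zs = n \<Longrightarrow> mop (mw x y) zs = mw (mop x zs) (mop y zs)"
  and Hne: "H \<noteq> {}"
  and qs: "\<And>x. x \<in> H \<Longrightarrow> mop x (replicate n x) \<in> H"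
  and ws: "\<And>x y. x \<in> H \<Longrightarrow> y \<in> H \<Longrightarrow> mw x y \<in> H"
  and vu: "\<And>x ys. length ys = n \<Longrightarrow> set ys \<subseteq> H \<Longrightarrow> mop x ys \<in> H \<Longrightarrow> x \<in> H"
  and HU: "H \<subseteq> U"
  and RU: "\<And>i x. 1 \<le> i \<Longrightarrow> i \<le> n \<Longrightarrow> x \<in> U \<Longrightarrow> R i x \<in> H"
  and RnU: "\<And>i x. 1 \<le> i \<Longrightarrow> i \<le> n \<Longrightarrow> R i x \<in> U \<Longrightarrow> x \<in> U"
  and C3a: "\<And>x y. x \<in> U \<Longrightarrow> y \<in> H \<Longrightarrow> mop y (Rs n R x) \<in> H"
  and C3b: "\<And>x y. x \<in> U \<Longrightarrow> y \<in> U \<Longrightarrow> mop y (Rs n R x) \<in> U"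
begin

lemma RsH: "x \<in> U \<Longrightarrow> set (Rs n R x) \<subseteq> H"
  using RU by (auto simp: Rs_set)

lemma L1: assumes "mop w (Rs n R v) \<in> U" shows "w \<in> U \<and> v \<in> U"
proof -
  let ?z = "mop w (Rs n R v)"
  have zH: "set (Rs n R ?z) \<subseteq> H" using RsH assms by blast
  have "R 1 ?z = R 1 (mop (R 1 w) (Rs n R v))" using A6[of "Rs n R v" 1 1 w] n1 by simp
  also have "\<dots> = R 1 (mop (R 1 v) (Rs n R ?z))" using A7[of "Rs n R v" 1 w] n1 by (simp add: Rs_nth)
  also have "\<dots> = mop (R 1 (R 1 v)) (Rs n R ?z)" using A4 n1 by simp
  finally have e1: "R 1 ?z = mop (R 1 (R 1 v)) (Rs n R ?z)" .
  have "R 1 ?z \<in> H" using RU n1 assms by simp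
  hence "R 1 (R 1 v) \<in> H" using vu[OF _ zH] e1 by simp
  hence vU: "v \<in> U" using RnU n1 HU by blast
  have "R 1 ?z = mop (R 1 w) (Rs n R v)" using A4 n1 by simp
  hence "R 1 w \<in> H" using vu[OF _ RsH[OF vU]] \<open>R 1 ?z \<in> H\<close> by simp
  hence "w \<in> U" using RnU n1 HU by blast
  thus ?thesis using vU by simp
qed

lemma L2: assumes "length ys = n" "mop x ys \<in> U" shows "set ys \<subseteq> U"
proof
  fix y assume "y \<in> set ys"
  then obtain k where k: "k < n" "ys ! k = y" using assms(1) by (auto simp: in_set_conv_nth)
  let ?z = "mop x ys"
  have zH: "set (Rs n R ?z) \<subseteq> H" using RsH assms by blast
  have "R 1 ?z = R 1 (mop (R (Suc k) x) ys)" using A6[of ys 1 "Suc k" x] n1 k assms by simp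
  also have "\<dots> = R 1 (mop y (Rs n R ?z))" using A7[of ys "Suc k" x] k assms by simp
  also have "\<dots> = mop (R 1 y) (Rs n R ?z)" using A4 n1 by simp
  finally have "R 1 ?z = mop (R 1 y) (Rs n R ?z)" .
  moreover have "R 1 ?z \<in> H" using RU n1 assms by simp
  ultimately have "R 1 y \<in> H" using vu[OF _ zH] by simp
  thus "y \<in> U" using RnU n1 HU by blast
qed

lemma meetU: "mw x y \<in> U \<Longrightarrow> x \<in> U \<and> y \<in> U"
  using L1[of x "mw x y"] L1[of y "mw y x"] A9[of x y] A9[of y x] comm[of x y] by auto

definition eqv where "eqv x y \<longleftrightarrow> mw x y \<in> U"

lemma eqv_refl: "x \<in> U \<Longrightarrow> eqv x x" by (simp add: eqv_def idem)
lemma eqv_sym: "eqv x y \<Longrightarrow> eqv y x" by (simp add: eqv_def comm)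
lemma eqv_U: "eqv x y \<Longrightarrow> x \<in> U \<and> y \<in> U" unfolding eqv_def by (rule meetU)
lemma eqv_trans: assumes "eqv x y" "eqv y z" shows "eqv x z"
proof -
  have yz: "mw y z = mop y (Rs n R (mw y z))" by (rule A9)
  have "mw x (mw y z) = mop (mw x y) (Rs n R (mw y z))"
    by (subst yz) (rule A8)
  hence "mw x (mw y z) \<in> U" using C3b assms unfolding eqv_def by simp
  hence "mw (mw x z) y \<in> U" by (metis assoc comm)
  thus ?thesis using meetU eqv_def by blast
qed

lemma res_eqv: assumes "x \<in> U" "z \<in> U" shows "mop x (Rs n R z) \<in> U" "eqv x (mop x (Rs n R z))"
proof -
  show "mop x (Rs n R z) \<in> U" using C3b assms by simp
  moreover have "mw x (mop x (Rs n R z)) = mop x (Rs n R z)" using A8[of x x z] idem by simp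
  ultimately show "eqv x (mop x (Rs n R z))" by (simp add: eqv_def)
qed

lemma compat1:
  assumes "length us = n" "i < n" "eqv y y'" "mop x (us[i:=y]) \<in> U"
  shows "mop x (us[i:=y']) \<in> U \<and> eqv (mop x (us[i:=y])) (mop x (us[i:=y']))"
proof -
  let ?d = "mw y y'"
  have dU: "?d \<in> U" using assms(3) eqv_def by simp
  have d1: "mop y (Rs n R ?d) = ?d" using A9[of y y'] by simp
  have d2: "mop y' (Rs n R ?d) = ?d" using A9[of y' y] comm[of y y'] by simp
  have e1: "mop (mop x (us[i:=y])) (Rs n R ?d) = mop x (us[i := ?d])"
    using A3[of us "Suc i" x y ?d] assms d1 by simp
  have e2: "mop (mop x (us[i:=y'])) (Rs n R ?d) = mop x (us[i := ?d])"
    using A3[of us "Suc i" x y' ?d] assms d2 by simp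
  let ?a = "mop x (us[i:=y])" and ?b = "mop x (us[i:=y'])"
  have mU: "mop x (us[i := ?d]) \<in> U" using e1 C3b dU assms(4) by metis
  hence bU: "?b \<in> U" using e2 L1 by metis
  have "mop (mw ?a ?b) (Rs n R ?d) = mw ?a (mop ?b (Rs n R ?d))" using A8 by simp
  also have "\<dots> = mw ?a (mop ?a (Rs n R ?d))" using e1 e2 by simp
  also have "\<dots> = mop ?a (Rs n R ?d)" using A8[of ?a ?a] idem by simp
  finally have "mop (mw ?a ?b) (Rs n R ?d) \<in> U" using e1 mU by simp
  hence "mw ?a ?b \<in> U" using L1 by blast
  thus ?thesis using bU eqv_def by simp
qed

lemma tdl: "k < length ys \<Longrightarrow> length ys = length ys' \<Longrightarrow>
   (take k ys' @ drop k ys)[k := ys' ! k] = take (Suc k) ys' @ drop (Suc k) ys"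
  by (rule nth_equalityI) (auto simp: nth_append nth_list_update)

lemma compat:
  assumes "length ys = n" "length ys' = n" "\<And>i. i < n \<Longrightarrow> eqv (ys!i) (ys'!i)" "mop x ys \<in> U"
  shows "mop x ys' \<in> U \<and> eqv (mop x ys) (mop x ys')"
proof -
  have "k \<le> n \<Longrightarrow> mop x (take k ys' @ drop k ys) \<in> U \<and> eqv (mop x ys) (mop x (take k ys' @ drop k ys))" for k
  proof (induction k)
    case 0 thus ?case using assms eqv_refl by simp
  next
    case (Suc k)
    let ?us = "take k ys' @ drop k ys"
    have lu: "length ?us = n" using assms Suc by simp
    have uk: "?us ! k = ys ! k" using assms Suc by (simp add: nth_append)
    have "?us[k := ys!k] = ?us" using uk list_update_id by metis
    hence "mop x (?us[k := ys!k]) \<in> U" using Suc by simp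
    from compat1[OF lu _ assms(3) this] Suc
    have "mop x (?us[k := ys'!k]) \<in> U \<and> eqv (mop x ?us) (mop x (?us[k := ys'!k]))"
      using \<open>?us[k := ys!k] = ?us\<close> by simp
    moreover have "?us[k := ys'!k] = take (Suc k) ys' @ drop (Suc k) ys"
      using tdl[of k ys ys'] assms Suc by simp
    ultimately show ?case using Suc eqv_trans by auto
  qed
  from this[of n] show ?thesis using assms by simp
qed


definition rep where "rep x = (SOME y. y \<in> U \<and> eqv x y)"
definition cls :: "'a \<Rightarrow> 'a list" where "cls x = [rep x]"
definition Apts where "Apts = cls ` U"
definition PP where "PP g = (\<lambda>ps. if length ps = n \<and> set ps \<subseteq> Apts \<and> mop g (map hd ps) \<in> U
   then Some (cls (mop g (map hd ps))) else None)"

lemma rep_prop: "x \<in> U \<Longrightarrow> rep x \<in> U \<and> eqv x (rep x)"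
  unfolding rep_def by (rule someI[of _ x]) (simp add: eqv_refl)

lemma cls_eq: assumes "x \<in> U" "y \<in> U" shows "cls x = cls y \<longleftrightarrow> eqv x y"
proof
  assume "cls x = cls y"
  hence "rep x = rep y" by (simp add: cls_def)
  thus "eqv x y" using rep_prop assms eqv_trans eqv_sym by metis
next
  assume e: "eqv x y"
  have "(\<lambda>z. z \<in> U \<and> eqv x z) = (\<lambda>z. z \<in> U \<and> eqv y z)"
    using e eqv_trans eqv_sym by blast
  thus "cls x = cls y" by (simp add: cls_def rep_def)
qed

lemma Apts_hd: assumes "p \<in> Apts" shows "hd p \<in> U \<and> cls (hd p) = p"
proof -
  obtain x where x: "x \<in> U" "p = cls x" using assms Apts_def by auto
  have "rep x \<in> U" "eqv (rep x) x" using rep_prop[OF x(1)] eqv_sym by auto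
  thus ?thesis using x cls_eq[of "rep x" x] by (simp add: cls_def)
qed

lemma cls_A: "x \<in> U \<Longrightarrow> cls x \<in> Apts" by (simp add: Apts_def)

lemma hd_cls[simp]: "hd (cls x) = rep x" by (simp add: cls_def)

lemma mapU: "set ps \<subseteq> Apts \<Longrightarrow> set (map hd ps) \<subseteq> U"
  using Apts_hd by auto

lemma repr: "is_representation n mop mw R Apts PP"
  unfolding is_representation_def
proof (intro conjI allI impI)
  fix g show "is_nfun n Apts (PP g)"
    unfolding is_nfun_def PP_def by (auto simp: dom_def ran_def cls_A split: if_splits)
next
  fix x and ys :: "'a list" assume ly: "length ys = n"
  show "PP (mop x ys) = fcomp (PP x) (map PP ys)"
  proof
    fix ps
    show "PP (mop x ys) ps = fcomp (PP x) (map PP ys) ps"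
    proof (cases "length ps = n \<and> set ps \<subseteq> Apts")
      case False
      have "ys \<noteq> []" using ly n1 by auto
      then obtain y where "y \<in> set ys" by fastforce
      hence "PP y ps = None" using False by (auto simp: PP_def)
      thus ?thesis using False \<open>y \<in> set ys\<close> by (auto simp: PP_def fcomp_def)
    next
      case True
      let ?q = "map hd ps"
      have lq: "length ?q = n" using True by simp
      have qU: "set ?q \<subseteq> U" using True mapU by blast
      let ?w = "map (\<lambda>y. mop y ?q) ys" and ?w' = "map (\<lambda>y. rep (mop y ?q)) ys"
      have e1: "mop (mop x ys) ?q = mop x ?w" using A1 ly lq by simp
      show ?thesis
      proof (cases "\<forall>y\<in>set ys. mop y ?q \<in> U")
        case False
        hence "\<not> set ?w \<subseteq> U" by auto
        hence "mop x ?w \<notin> U" using L2[of ?w x] ly by auto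
        thus ?thesis using False True e1 by (auto simp: PP_def fcomp_def)
      next
        case allU: True
        have args: "map (\<lambda>g. the (g ps)) (map PP ys) = map (\<lambda>y. cls (mop y ?q)) ys"
          using allU True by (auto simp: PP_def)
        have sA: "set (map (\<lambda>y. cls (mop y ?q)) ys) \<subseteq> Apts" using allU cls_A by auto
        have hdw: "map hd (map (\<lambda>y. cls (mop y ?q)) ys) = ?w'" by simp
        have pw: "\<And>i. i < n \<Longrightarrow> eqv (?w!i) (?w'!i)" using allU rep_prop ly by simp
        have pw': "\<And>i. i < n \<Longrightarrow> eqv (?w'!i) (?w!i)" using pw eqv_sym by blast
        have nn: "(\<forall>g\<in>set (map PP ys). g ps \<noteq> None) = True" using allU True by (auto simp: PP_def)
        have fc0: "fcomp (PP x) (map PP ys) ps = PP x (map (\<lambda>g. the (g ps)) (map PP ys))"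
          unfolding fcomp_def by (simp only: nn if_True)
        have fc: "fcomp (PP x) (map PP ys) ps = PP x (map (\<lambda>y. cls (mop y ?q)) ys)"
          by (simp only: fc0 args)
        show ?thesis
        proof (cases "mop x ?w \<in> U")
          case True2: True
          from compat[of ?w ?w' x] pw True2 ly
          have c: "mop x ?w' \<in> U \<and> eqv (mop x ?w) (mop x ?w')" by simp
          hence "cls (mop x ?w) = cls (mop x ?w')" using cls_eq eqv_U by blast
          thus ?thesis using fc c True True2 e1 sA hdw ly by (simp add: PP_def o_def)
        next
          case False2: False
          have "mop x ?w' \<notin> U" using compat[of ?w' ?w x] pw' False2 ly by auto
          thus ?thesis using fc False2 True e1 sA hdw ly by (simp add: PP_def o_def)
        qed
      qed
    qed
  qed
next
  fix i x assume i: "1 \<le> i" "i \<le> n"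
  show "PP (R i x) = fR i (PP x)"
  proof
    fix ps
    show "PP (R i x) ps = fR i (PP x) ps"
    proof (cases "length ps = n \<and> set ps \<subseteq> Apts")
      case False thus ?thesis by (auto simp: PP_def fR_def)
    next
      case True
      let ?q = "map hd ps"
      have lq: "length ?q = n" using True by simp
      have qU: "set ?q \<subseteq> U" using True mapU by blast
      have e: "mop (R i x) ?q = mop (?q ! (i - 1)) (Rs n R (mop x ?q))" using A7 lq i by simp
      have pi: "ps ! (i - 1) \<in> Apts" using True i by auto
      have qi: "?q ! (i - 1) = hd (ps ! (i - 1))" using True i by simp
      have qiU: "?q ! (i - 1) \<in> U" using qi pi Apts_hd by simp
      show ?thesis
      proof (cases "mop x ?q \<in> U")
        case True2: True
        have r: "mop (R i x) ?q \<in> U \<and> eqv (?q ! (i - 1)) (mop (R i x) ?q)"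
          using res_eqv[OF qiU True2] e by simp
        hence "cls (mop (R i x) ?q) = cls (?q ! (i - 1))" using cls_eq eqv_U eqv_sym by metis
        also have "\<dots> = ps ! (i - 1)" using qi pi Apts_hd by simp
        finally show ?thesis using r True True2 by (simp add: PP_def fR_def)
      next
        case False2: False
        have "mop (R i x) ?q \<notin> U" using e L1 False2 by metis
        thus ?thesis using False2 by (simp add: PP_def fR_def)
      qed
    qed
  qed
next
  fix x y
  show "PP (mw x y) = finter (PP x) (PP y)"
  proof
    fix ps
    show "PP (mw x y) ps = finter (PP x) (PP y) ps"
    proof (cases "length ps = n \<and> set ps \<subseteq> Apts")
      case False thus ?thesis by (auto simp: PP_def finter_def)
    next
      case True
      let ?q = "map hd ps"
      have lq: "length ?q = n" using True by simp
      have e: "mop (mw x y) ?q = mw (mop x ?q) (mop y ?q)" using A10 lq by simp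
      show ?thesis
      proof (cases "mw (mop x ?q) (mop y ?q) \<in> U")
        case True2: True
        have u: "mop x ?q \<in> U" "mop y ?q \<in> U" using meetU[OF True2] by auto
        have c1: "cls (mop x ?q) = cls (mop y ?q)" using cls_eq[OF u] True2 by (simp add: eqv_def)
        have "mw (mop x ?q) (mw (mop x ?q) (mop y ?q)) = mw (mop x ?q) (mop y ?q)"
          by (simp add: assoc[symmetric] idem)
        hence "eqv (mop x ?q) (mw (mop x ?q) (mop y ?q))" using True2 by (simp add: eqv_def)
        hence "eqv (mw (mop x ?q) (mop y ?q)) (mop x ?q)" by (rule eqv_sym)
        hence "cls (mw (mop x ?q) (mop y ?q)) = cls (mop x ?q)"
          using cls_eq[OF True2 u(1)] by simp
        moreover have "PP x ps = Some (cls (mop x ?q))" using True u by (simp add: PP_def)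
        moreover have "PP y ps = Some (cls (mop y ?q))" using True u by (simp add: PP_def)
        moreover have "PP (mw x y) ps = Some (cls (mw (mop x ?q) (mop y ?q)))"
        proof -
          have c: "length ps = n" "set ps \<subseteq> Apts" "mop (mw x y) ?q \<in> U"
            using True apply blast using True apply blast by (subst e) (rule True2)
          have "PP (mw x y) ps = Some (cls (mop (mw x y) ?q))"
            by (simp only: PP_def c simp_thms if_True)
          thus ?thesis by (simp only: e)
        qed
        ultimately show ?thesis using c1 by (simp add: finter_def)
      next
        case False2: False
        have "PP x ps \<noteq> PP y ps \<or> PP x ps = None"
        proof (cases "mop x ?q \<in> U \<and> mop y ?q \<in> U")
          case True3: True
          hence "cls (mop x ?q) \<noteq> cls (mop y ?q)" using cls_eq[of "mop x ?q" "mop y ?q"] False2 by (simp add: eqv_def)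
          thus ?thesis using True True3 by (simp add: PP_def)
        next
          case False
          thus ?thesis using True by (auto simp: PP_def)
        qed
        moreover have "mop (mw x y) ?q \<notin> U" by (subst e) (rule False2)
        hence "PP (mw x y) ps = None" unfolding PP_def by simp
        ultimately show ?thesis unfolding finter_def by auto
      qed
    qed
  qed
qed

lemma Hcls: assumes "h \<in> H" "eqv h y" shows "y \<in> H"
proof -
  have dU: "mw h y \<in> U" using assms eqv_def by simp
  have "mop h (Rs n R (mw h y)) \<in> H" using C3a dU assms(1) by blast
  hence "mw h y \<in> H" using A9[of h y] by simp
  moreover have "mw h y = mop y (Rs n R (mw h y))" using A9[of y h] comm[of y h] by simp
  ultimately show ?thesis using vu[OF _ RsH[OF dU]] by simp
qed

lemma H_eqv: "h \<in> H \<Longrightarrow> h' \<in> H \<Longrightarrow> eqv h h'"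
  using ws HU unfolding eqv_def by blast

lemma HH: assumes "g \<in> H" "r \<in> H" shows "mop g (replicate n r) \<in> H"
proof -
  let ?c = "mw g r"
  have cH: "?c \<in> H" using ws assms by simp
  have cc: "mop ?c (replicate n ?c) \<in> H" using qs cH by simp
  have e: "mop ?c (replicate n ?c) = mw (mop g (replicate n ?c)) (mop r (replicate n ?c))"
    using A10 by simp
  have "mw (mop g (replicate n ?c)) (mop r (replicate n ?c)) \<in> U" using cc HU e by auto
  hence gU: "mop g (replicate n ?c) \<in> U" using meetU by blast
  have "mw (mop g (replicate n ?c)) (mop ?c (replicate n ?c)) = mop ?c (replicate n ?c)"
    using e by (simp add: assoc[symmetric] idem)
  hence "eqv (mop g (replicate n ?c)) (mop ?c (replicate n ?c))"
    using cc HU unfolding eqv_def by auto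
  hence "eqv (mop ?c (replicate n ?c)) (mop g (replicate n ?c))" by (rule eqv_sym)
  hence g1: "mop g (replicate n ?c) \<in> H" using Hcls cc by blast
  have "eqv ?c r" using H_eqv cH assms by simp
  hence "mop g (replicate n r) \<in> U \<and> eqv (mop g (replicate n ?c)) (mop g (replicate n r))"
    using compat[of "replicate n ?c" "replicate n r" g] gU by simp
  thus ?thesis using Hcls g1 by blast
qed

lemma stab: "is_stabilizer TYPE('a list) n mop mw R H"
proof -
  obtain h0 where h0: "h0 \<in> H" using Hne by auto
  let ?a = "cls h0"
  have h0U: "h0 \<in> U" using h0 HU by auto
  have aA: "?a \<in> Apts" using cls_A h0U by simp
  let ?r = "rep h0"
  have rH: "?r \<in> H" using rep_prop[OF h0U] Hcls h0 by blast
  have mh: "map hd (replicate n ?a) = replicate n ?r" by simp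
  have "H = {g. PP g (replicate n ?a) = Some ?a}"
  proof (intro set_eqI iffI)
    fix g assume g: "g \<in> H"
    have m: "mop g (replicate n ?r) \<in> H" using HH g rH by simp
    hence "cls (mop g (replicate n ?r)) = ?a" using cls_eq H_eqv h0 HU by blast
    thus "g \<in> {g. PP g (replicate n ?a) = Some ?a}" using m HU aA by (auto simp: PP_def)
  next
    fix g assume "g \<in> {g. PP g (replicate n ?a) = Some ?a}"
    hence m: "mop g (replicate n ?r) \<in> U" "cls (mop g (replicate n ?r)) = ?a"
      by (auto simp: PP_def split: if_splits)
    hence "eqv h0 (mop g (replicate n ?r))" using cls_eq h0U eqv_sym by metis
    hence "mop g (replicate n ?r) \<in> H" using Hcls h0 by blast
    moreover have "set (replicate n ?r) \<subseteq> H" using rH by auto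
    ultimately show "g \<in> H" using vu[of "replicate n ?r" g] by simp
  qed
  thus ?thesis unfolding is_stabilizer_def using Hne aA repr by blast
qed

end

lemma fc_H:
  assumes rep: "is_representation n mop mw R A P" and ly: "length ys = n"
    and yH: "\<forall>y\<in>set ys. P y (replicate n a) = Some a"
  shows "P (mop x ys) (replicate n a) = P x (replicate n a)"
proof -
  have "P (mop x ys) = fcomp (P x) (map P ys)" using rep ly by (simp add: is_representation_def)
  moreover have "map (\<lambda>g. the (g (replicate n a))) (map P ys) = replicate n a"
  proof -
    have "map (\<lambda>g. the (g (replicate n a))) (map P ys) = map (\<lambda>_. a) ys" using yH by simp
    thus ?thesis using ly by (simp add: map_replicate_const)
  qed
  ultimately show ?thesis using yH by (simp add: fcomp_def)
qed

lemma fc_def: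
  assumes rep: "is_representation n mop mw R A P" and ly: "length ys = n"
    and "P (mop x ys) (replicate n a) \<noteq> None"
  shows "\<forall>y\<in>set ys. P y (replicate n a) \<noteq> None"
proof -
  have "P (mop x ys) = fcomp (P x) (map P ys)" using rep ly by (simp add: is_representation_def)
  thus ?thesis using assms(3) by (auto simp: fcomp_def split: if_splits)
qed

lemma fR_a:
  assumes rep: "is_representation n mop mw R A P" "1 \<le> i" "i \<le> n"
    and "P x (replicate n a) \<noteq> None"
  shows "P (R i x) (replicate n a) = Some a"
  using assms by (simp add: is_representation_def fR_def)

lemma fR_None:
  assumes rep: "is_representation n mop mw R A P" "1 \<le> i" "i \<le> n"
    and "P x (replicate n a) = None"
  shows "P (R i x) (replicate n a) = None"
  using assms by (simp add: is_representation_def fR_def)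

lemma Rs_a:
  assumes rep: "is_representation n mop mw R A P"
    and "P x (replicate n a) \<noteq> None"
  shows "\<forall>y\<in>set (Rs n R x). P y (replicate n a) = Some a"
  using fR_a[OF rep _ _ assms(2)] by (auto simp: Rs_set)

lemma dir1:
  assumes n1: "1 \<le> n" and rep: "is_representation n mop mw R A P"
    and Hd: "H = {g. P g (replicate n a) = Some a}" and Hne: "H \<noteq> {}"
  shows "(quasi_stable n mop H \<and> wedge_stable mw H \<and> v_unitary n mop H) \<and>
      (\<exists>U. H \<subseteq> U \<and>
         (\<forall>i\<in>{1..n}. R i ` U \<subseteq> H \<and> R i ` (- U) \<subseteq> - U) \<and>
         (\<forall>x y. x \<in> U \<and> y \<in> H \<longrightarrow> mop y (Rs n R x) \<in> H) \<and>
         (\<forall>x y. x \<in> U \<and> y \<in> U \<longrightarrow> mop y (Rs n R x) \<in> U))"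
proof (intro conjI)
  let ?a = "replicate n a"
  show "quasi_stable n mop H" unfolding quasi_stable_def
  proof (intro conjI ballI)
    fix x assume x: "x \<in> H"
    hence "\<forall>y\<in>set (replicate n x). P y ?a = Some a" using Hd by auto
    thus "mop x (replicate n x) \<in> H" using fc_H[OF rep, of "replicate n x"] x Hd by simp
  qed (rule Hne)
  show "wedge_stable mw H" unfolding wedge_stable_def
    using Hne Hd rep by (auto simp: is_representation_def finter_def)
  show "v_unitary n mop H" unfolding v_unitary_def
  proof (intro conjI allI impI)
    fix x ys assume ly: "length (ys::'a list) = n" and s: "set ys \<subseteq> H" and m: "mop x ys \<in> H"
    have "\<forall>y\<in>set ys. P y ?a = Some a" using s Hd by auto
    thus "x \<in> H" using fc_H[OF rep ly] m Hd by simp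
  qed (rule Hne)
  let ?U = "{g. P g ?a \<noteq> None}"
  show "\<exists>U. H \<subseteq> U \<and>
         (\<forall>i\<in>{1..n}. R i ` U \<subseteq> H \<and> R i ` (- U) \<subseteq> - U) \<and>
         (\<forall>x y. x \<in> U \<and> y \<in> H \<longrightarrow> mop y (Rs n R x) \<in> H) \<and>
         (\<forall>x y. x \<in> U \<and> y \<in> U \<longrightarrow> mop y (Rs n R x) \<in> U)"
  proof (intro exI[of _ ?U] conjI ballI allI impI)
    show "H \<subseteq> ?U" using Hd by auto
  next
    fix i assume i: "i \<in> {1..n}"
    show "R i ` ?U \<subseteq> H" using fR_a[OF rep] i Hd by auto
    show "R i ` (- ?U) \<subseteq> - ?U" using fR_None[OF rep, of i _ a] i by fastforce
  next
    fix x y assume "x \<in> ?U \<and> y \<in> H"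
    thus "mop y (Rs n R x) \<in> H" using fc_H[OF rep _ Rs_a[OF rep]] Hd by auto
  next
    fix x y assume "x \<in> ?U \<and> y \<in> ?U"
    thus "mop y (Rs n R x) \<in> ?U" using fc_H[OF rep _ Rs_a[OF rep]] by auto
  qed
qed

theorem theorem4:
  fixes n :: nat
    and mop :: "'a \<Rightarrow> 'a list \<Rightarrow> 'a"
    and mw :: "'a \<Rightarrow> 'a \<Rightarrow> 'a"
    and R :: "nat \<Rightarrow> 'a \<Rightarrow> 'a"
    and H :: "'a set"
  assumes "1 \<le> n"
    and "functional_menger_wedge_algebra n mop mw R"
    and "H \<noteq> {}"
  defines "conds \<equiv>
      (quasi_stable n mop H \<and> wedge_stable mw H \<and> v_unitary n mop H) \<and>
      (\<exists>U. H \<subseteq> U \<and>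
         (\<forall>i\<in>{1..n}. R i ` U \<subseteq> H \<and> R i ` (- U) \<subseteq> - U) \<and>
         (\<forall>x y. x \<in> U \<and> y \<in> H \<longrightarrow> mop y (Rs n R x) \<in> H) \<and>
         (\<forall>x y. x \<in> U \<and> y \<in> U \<longrightarrow> mop y (Rs n R x) \<in> U))"
  shows "(is_stabilizer TYPE('b) n mop mw R H \<longrightarrow> conds) \<and>
         (conds \<longrightarrow> is_stabilizer TYPE('a list) n mop mw R H)"
proof (intro conjI impI)
  assume "is_stabilizer TYPE('b) n mop mw R H"
  then obtain A :: "'b set" and P a where o: "a \<in> A" "is_representation n mop mw R A P"
      "H = {g. P g (replicate n a) = Some a}"
    unfolding is_stabilizer_def by blast
  show conds unfolding assms(4) by (rule dir1[OF assms(1) o(2) o(3) assms(3)])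
next
  assume c: conds
  have fm: "functional_menger_system n mop R" and W: "\<forall>x y z. mw (mw x y) z = mw x (mw y z)"
     "\<forall>x y. mw x y = mw y x" "\<forall>x. mw x x = x"
     "\<forall>x y z. mw x (mop y (Rs n R z)) = mop (mw x y) (Rs n R z)"
     "\<forall>x y. mw x y = mop x (Rs n R (mw x y))"
     "\<forall>x y zs. length zs = n \<longrightarrow> mop (mw x y) zs = mw (mop x zs) (mop y zs)"
    using assms(2) unfolding functional_menger_wedge_algebra_def by blast+
  note F = fm[unfolded functional_menger_system_def]
  from c obtain U where U: "H \<subseteq> U" "\<forall>i\<in>{1..n}. R i ` U \<subseteq> H \<and> R i ` (- U) \<subseteq> - U"
    "\<forall>x y. x \<in> U \<and> y \<in> H \<longrightarrow> mop y (Rs n R x) \<in> H"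
    "\<forall>x y. x \<in> U \<and> y \<in> U \<longrightarrow> mop y (Rs n R x) \<in> U"
    and Q: "quasi_stable n mop H" "wedge_stable mw H" "v_unitary n mop H"
    unfolding assms(4) by blast
  interpret ctx n mop mw R H U
    apply (rule ctx.intro)
    subgoal by (rule assms(1))
    subgoal by (rule F[THEN conjunct1, rule_format]) assumption+
    subgoal by (rule F[THEN conjunct2, THEN conjunct2, THEN conjunct1, rule_format]) assumption+
    subgoal by (rule F[THEN conjunct2, THEN conjunct2, THEN conjunct2, THEN conjunct1, rule_format]) assumption+
    subgoal by (rule F[THEN conjunct2, THEN conjunct2, THEN conjunct2, THEN conjunct2, THEN conjunct2, THEN conjunct1, rule_format]) assumption+
    subgoal by (rule F[THEN conjunct2, THEN conjunct2, THEN conjunct2, THEN conjunct2, THEN conjunct2, THEN conjunct2, rule_format]) assumption+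
    subgoal by (rule W(1)[rule_format])
    subgoal by (rule W(2)[rule_format])
    subgoal by (rule W(3)[rule_format])
    subgoal by (rule W(4)[rule_format])
    subgoal by (rule W(5)[rule_format])
    subgoal by (rule W(6)[rule_format]) assumption
    subgoal by (rule assms(3))
    subgoal using Q(1) unfolding quasi_stable_def by blast
    subgoal using Q(2) unfolding wedge_stable_def by blast
    subgoal using Q(3) unfolding v_unitary_def by blast
    subgoal by (rule U(1))
    subgoal for i x using U(2) by fastforce
    subgoal for i x using U(2) by fastforce
    subgoal for x y using U(3) by blast
    subgoal for x y using U(4) by blast
    done
  show "is_stabilizer TYPE('a list) n mop mw R H" by (rule stab)
qed

end
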